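(* Fix a set $\Psi\subseteq\mathcal{K}$, a number $q\ge0$, and for each $k\in\Psi$ an index $k'\in\mathcal{N}$. Define, for variables $p_n\ge0$ ($n\in\mathcal{N}$), $p_{k,k'}\ge0$ and $w_k\in(0,W^k_{MC}]$ ($k\in\Psi$), and multipliers $\lambda\ge0,\mu\ge0$, the Lagrangian $$\mathcal{L}=(1+\mu)\Big[\sum_{n=1}^N B^n_{SC}\log_2\!\Big(1+\tfrac{p_ng_n}{B^n_{SC}N_0}\Big)+\sum_{k\in\Psi}(W^k_{MC}-w_k)\log_2\!\Big(1+\tfrac{p_{k,k'}g_{k,k'}}{(W^k_{MC}-w_k)N_0}\Big)\Big]-\mu R^{SC}_{\min}$$ $$-q\Big(\sum_{n}\tfrac{p_n}{\xi}+\sum_{k\in\Psi}\tfrac{p_{k,k'}}{\xi}+\sum_{k\in\Psi}\big(2^{R^k_{MC}/w_k}-1\big)\tfrac{w_kN_0}{\xi h_k}+P_{\rm c}\Big)+\lambda\Big(P^{SC}_{\max}-\sum_n p_n-\sum_{k\in\Psi}p_{k,k'}-\sum_{k\in\Psi}\big(2^{R^k_{MC}/w_k}-1\big)\tfrac{w_kN_0}{h_k}\Big),$$ where $(W^k_{MC}-w_k)\log_2(\cdot)$ is interpreted as $0$ when $w_k=W^k_{MC}$. Then, given $\lambda$ and $\mu$, the bandwidth and power allocation maximizing $\mathcal{L}$ is $$w_k=\min\!\left(\frac{R^k_{MC}\ln2}{\mathcal{W}\!\left(\frac1e\Big(\frac{\mathcal{C}_k h_k}{(q/\xi+\lambda)N_0}-1\Big)\right)+1},\;W^k_{MC}\right),\quad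 k\in\Psi,$$ $$p_{k,k'}=(W^k_{MC}-w_k)\left[\frac{(1+\mu)\xi}{(q+\lambda\xi)\ln2}-\frac{N_0}{g_{k,k'}}\right]^+,\quad k\in\Psi,$$ $$p_n=B^n_{SC}\left[\frac{(1+\mu)\xi}{(q+\lambda\xi)\ln2}-\frac{N_0}{g_n}\right]^+,\quad n\in\mathcal{N},$$ where $[x]^+=\max\{x,0\}$, $\mathcal{W}$ is the Lambert $W$ function (i.e. $x=\mathcal{W}(x)e^{\mathcal{W}(x)}$), $\widetilde{p}_{k,k'}=\left[\frac{(1+\mu)\xi}{(q+\lambda\xi)\ln2}-\frac{N_0}{g_{k,k'}}\right]^+$, and $\mathcal{C}_k=(1+\mu)\log_2\!\big(1+\widetilde{p}_{k,k'}\frac{g_{k,k'}}{N_0}\big)-\big(\frac{q}{\xi}+\lambda\big)\widetilde{p}_{k,k'}$.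
   Context: Constants: $N_0>0$ noise spectral density; $\xi\in(0,1]$ power amplifier efficiency; $P_{\rm c}>0$ circuit power; $P^{SC}_{\max}>0$; $R^{SC}_{\min}\ge0$. For each $k\in\mathcal{K}=\{1,\dots,K\}$: $W^k_{MC}>0$, $R^k_{MC}>0$, $h_k>0$, and $g_{k,n}>0$ for $n\in\mathcal{N}=\{1,\dots,N\}$. For each $n\in\mathcal{N}$: $B^n_{SC}>0$, $g_n>0$. This Lagrangian arises from the subtractive (Dinkelbach) form of the small-cell energy-efficiency maximization for a fixed set $\Psi$ of served macro users, with $b_{k,k'}=W^k_{MC}-w_k$ and $q_k=(2^{R^k_{MC}/w_k}-1)w_kN_0/h_k$ substituted; $\lambda$ and $\mu$ are the multipliers of the total power constraint and the minimum rate constraint. *)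

theory Defs
  imports Complex_Main
begin

definition pos_part :: "real \<Rightarrow> real" where
  "pos_part x = max x 0"

definition lambertW :: "real \<Rightarrow> real" where
  "lambertW x = (THE y. y \<ge> -1 \<and> y * exp y = x)"

definition bw_rate :: "real \<Rightarrow> real \<Rightarrow> real \<Rightarrow> real \<Rightarrow> real" where
  "bw_rate N0 b p g = (if b = 0 then 0 else b * log 2 (1 + p * g / (b * N0)))"

text \<open>The Lagrangian.  Index sets: \<N> = {1..N}; \<Psi> is the served macro users;
  kp k is the index k' for k \<in> \<Psi>; g2 k n is g_{k,n}.  Variables:
  p n = p_n, pk k = p_{k,k'}, w k = w_k.\<close>
definition lagrangian ::
  "real \<Rightarrow> real \<Rightarrow> real \<Rightarrow> real \<Rightarrow> real \<Rightarrow> nat \<Rightarrow>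
   (nat \<Rightarrow> real) \<Rightarrow> (nat \<Rightarrow> real) \<Rightarrow> (nat \<Rightarrow> real) \<Rightarrow> (nat \<Rightarrow> nat \<Rightarrow> real) \<Rightarrow>
   (nat \<Rightarrow> real) \<Rightarrow> (nat \<Rightarrow> real) \<Rightarrow> nat set \<Rightarrow> (nat \<Rightarrow> nat) \<Rightarrow>
   real \<Rightarrow> real \<Rightarrow> real \<Rightarrow>
   (nat \<Rightarrow> real) \<Rightarrow> (nat \<Rightarrow> real) \<Rightarrow> (nat \<Rightarrow> real) \<Rightarrow> real" where
  "lagrangian N0 \<xi> Pc Pmax Rmin N W R h g2 B g \<Psi> kp q lam \<mu> p pk w =
     (1 + \<mu>) * ((\<Sum>n\<in>{1..N}. B n * log 2 (1 + p n * g n / (B n * N0)))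
               + (\<Sum>k\<in>\<Psi>. bw_rate N0 (W k - w k) (pk k) (g2 k (kp k))))
     - \<mu> * Rmin
     - q * ((\<Sum>n\<in>{1..N}. p n / \<xi>) + (\<Sum>k\<in>\<Psi>. pk k / \<xi>)
            + (\<Sum>k\<in>\<Psi>. (2 powr (R k / w k) - 1) * w k * N0 / (\<xi> * h k)) + Pc)
     + lam * (Pmax - (\<Sum>n\<in>{1..N}. p n) - (\<Sum>k\<in>\<Psi>. pk k)
            - (\<Sum>k\<in>\<Psi>. (2 powr (R k / w k) - 1) * w k * N0 / h k))"

definition water_level :: "real \<Rightarrow> real \<Rightarrow> real \<Rightarrow> real \<Rightarrow> real" where
  "water_level \<xi> q lam \<mu> = (1 + \<mu>) * \<xi> / ((q + lam * \<xi>) * ln 2)"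

definition p_tilde :: "real \<Rightarrow> real \<Rightarrow> real \<Rightarrow> real \<Rightarrow> real \<Rightarrow> real \<Rightarrow> real" where
  "p_tilde N0 \<xi> q lam \<mu> gkk = pos_part (water_level \<xi> q lam \<mu> - N0 / gkk)"

definition C_coef :: "real \<Rightarrow> real \<Rightarrow> real \<Rightarrow> real \<Rightarrow> real \<Rightarrow> real \<Rightarrow> real" where
  "C_coef N0 \<xi> q lam \<mu> gkk =
     (let pt = p_tilde N0 \<xi> q lam \<mu> gkk in
      (1 + \<mu>) * log 2 (1 + pt * gkk / N0) - (q / \<xi> + lam) * pt)"

text \<open>Optimal bandwidth.  The denominator W(.)+1 is \<ge> 0; when it is 0 the
  first argument of min is +\<infinity> (positive numerator over 0), so the min is W_MC.\<close>
definition w_opt :: "real \<Rightarrow> real \<Rightarrow> real \<Rightarrow> real \<Rightarrow> real \<Rightarrow> real \<Rightarrow> real \<Rightarrow> real \<Rightarrow> real \<Rightarrow> real" where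
  "w_opt N0 \<xi> q lam \<mu> Wk Rk hk gkk =
     (let d = lambertW (exp (-1) * (C_coef N0 \<xi> q lam \<mu> gkk * hk / ((q / \<xi> + lam) * N0) - 1)) + 1
      in if d > 0 then min (Rk * ln 2 / d) Wk else Wk)"

definition pk_opt :: "real \<Rightarrow> real \<Rightarrow> real \<Rightarrow> real \<Rightarrow> real \<Rightarrow> real \<Rightarrow> real \<Rightarrow> real \<Rightarrow> real \<Rightarrow> real" where
  "pk_opt N0 \<xi> q lam \<mu> Wk Rk hk gkk =
     (Wk - w_opt N0 \<xi> q lam \<mu> Wk Rk hk gkk) * p_tilde N0 \<xi> q lam \<mu> gkk"

definition pn_opt :: "real \<Rightarrow> real \<Rightarrow> real \<Rightarrow> real \<Rightarrow> real \<Rightarrow> real \<Rightarrow> real \<Rightarrow> real" where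
  "pn_opt N0 \<xi> q lam \<mu> Bn gn = Bn * pos_part (water_level \<xi> q lam \<mu> - N0 / gn)"

end

theory Submission
  imports Defs
begin

lemma xexp_strict:
  fixes a b :: real
  assumes "-1 \<le> a" "a < b" shows "a*exp a < b*exp b"
proof -
  have d: "\<And>x. a \<le> x \<Longrightarrow> x \<le> b \<Longrightarrow> DERIV (\<lambda>x. x*exp x) x :> (1+x)*exp x"
    by (auto intro!: derivative_eq_intros simp: algebra_simps)
  from MVT2[OF assms(2) d] obtain z where z: "z>a" "z<b"
    "b*exp b - a*exp a = (b-a)*((1+z)*exp z)" by auto
  have "(b-a)*((1+z)*exp z) > 0" using z assms by (intro mult_pos_pos) auto
  with z show ?thesis by simp
qed

lemma lambertW_prop:
  fixes x :: real
  assumes "x \<ge> -exp(-1)"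
  shows "lambertW x \<ge> -1 \<and> lambertW x * exp (lambertW x) = x"
proof -
  have c: "continuous_on {-1..max x 0} (\<lambda>y::real. y*exp y)" by (intro continuous_intros)
  have f1: "(-1) * exp (-1::real) \<le> x" using assms by simp
  have f2: "x \<le> max x 0 * exp (max x 0)"
  proof (cases "x \<ge> 0")
    case True
    have "x * 1 \<le> x * exp x" using True by (intro mult_left_mono) auto
    then show ?thesis using True by simp
  next
    case False then show ?thesis by simp
  qed
  have le: "-1 \<le> max x 0" by simp
  obtain y where y: "-1 \<le> y" "y*exp y = x"
    using IVT'[of "\<lambda>y. y*exp y", OF f1 f2 le c] by blast
  have u: "\<And>z. z \<ge> -1 \<and> z*exp z = x \<Longrightarrow> z = y"
  proof -
    fix z assume z: "z \<ge> -1 \<and> z*exp z = x"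
    show "z = y"
    proof (cases z y rule: linorder_cases)
      case less
      have "z*exp z < y*exp y" using xexp_strict[of z y] z less by blast
      then show ?thesis using z y by linarith
    next
      case greater
      have "y*exp y < z*exp z" using xexp_strict[of y z] y greater by blast
      then show ?thesis using z y by linarith
    qed simp
  qed
  have "lambertW x = y" unfolding lambertW_def
    using y u by (intro the_equality) blast+
  then show ?thesis using y by simp
qed

lemma wf:
  fixes c N0 g mu u L pt :: real
  assumes c: "c > 0" and N0: "N0 > 0" and g: "g > 0" and mu: "mu \<ge> 0" and u: "u \<ge> 0"
    and L: "L = (1+mu)/(c*ln 2)" and pt: "pt = pos_part (L - N0/g)"
  shows "(1+mu)*log 2 (1 + u*g/N0) - c*u \<le> (1+mu)*log 2 (1 + pt*g/N0) - c*pt"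
proof -
  have ln2: "ln (2::real) > 0" by simp
  have ml: "ln 2 + mu * ln 2 > 0" using ln2 mu by (smt (verit) mult_nonneg_nonneg)
  have x0: "1 + u*g/N0 > 0" using u g N0 by (simp add: add_pos_nonneg)
  show ?thesis
  proof (cases "L > N0/g")
    case True
    then have ptv: "pt = L - N0/g" using pt by (simp add: pos_part_def)
    have one: "1 + pt*g/N0 = L*g/N0" using ptv g N0 by (simp add: field_simps)
    have Lpos: "L > 0" using True g N0 by (smt (verit) divide_pos_pos)
    have y0: "L*g/N0 > 0" using Lpos g N0 by simp
    have "ln (1 + u*g/N0) - ln (L*g/N0) = ln ((1 + u*g/N0)/(L*g/N0))"
      using x0 y0 by (rule ln_divide_pos[symmetric])
    also have "\<dots> \<le> (1 + u*g/N0)/(L*g/N0) - 1" by (rule ln_le_minus_one, rule divide_pos_pos[OF x0 y0])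
    also have "\<dots> = (u - pt)/L" unfolding ptv using Lpos g N0
      by (simp add: field_simps)
    finally have fin: "ln (1 + u*g/N0) - ln (L*g/N0) \<le> (u - pt)/L" .
    have "ln (1+pt*g/N0) = ln (L*g/N0)" by (simp only: one)
    with fin have "ln (1 + u*g/N0) - ln (1+pt*g/N0) \<le> (u - pt)/L" by linarith
    then have "(1+mu)/ln 2 * (ln (1 + u*g/N0) - ln (1+pt*g/N0)) \<le> (1+mu)/ln 2 * ((u - pt)/L)"
      using mu ln2 by (intro mult_left_mono) auto
    also have "(1+mu)/ln 2 * ((u - pt)/L) = c*(u-pt)" unfolding L using c ln2 mu ml by (simp add: field_simps)
    finally have X: "(1+mu)/ln 2 * (ln (1 + u*g/N0) - ln (1+pt*g/N0)) \<le> c*(u-pt)" .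
    have "(1+mu)*log 2 (1 + u*g/N0) - (1+mu)*log 2 (1 + pt*g/N0) = (1+mu)/ln 2 * (ln (1 + u*g/N0) - ln (1+pt*g/N0))"
      unfolding log_def using ln2 by (simp add: field_simps)
    with X show ?thesis by (simp add: algebra_simps)
  next
    case False
    then have ptv: "pt = 0" using pt by (simp add: pos_part_def)
    have "ln (1 + u*g/N0) \<le> u*g/N0" using x0 ln_le_minus_one[OF x0] by simp
    then have "(1+mu)/ln 2 * ln (1 + u*g/N0) \<le> (1+mu)/ln 2 * (u*g/N0)"
      using mu ln2 by (intro mult_left_mono) auto
    also have "(1+mu)/ln 2 * (u*g/N0) = L*c*(u*g/N0)" unfolding L using c ln2 mu ml N0 by (simp add: field_simps)
    also have "\<dots> \<le> (N0/g)*c*(u*g/N0)" using False c u g N0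
      by (intro mult_right_mono) auto
    also have "\<dots> = c*u" using g N0 by (simp add: field_simps)
    finally have X: "(1+mu)/ln 2 * ln (1 + u*g/N0) \<le> c*u" .
    have "(1+mu)*log 2 (1 + u*g/N0) = (1+mu)/ln 2 * ln (1 + u*g/N0)"
      unfolding log_def using ln2 by (simp add: field_simps)
    with X show ?thesis using ptv by simp
  qed
qed


lemma tangent:
  fixes a w w0 :: real assumes "w > 0" "w0 > 0"
  shows "w*exp(a/w) \<ge> w0*exp(a/w0) + exp(a/w0)*(1 - a/w0)*(w-w0)"
proof -
  have "1 + (a/w - a/w0) \<le> exp (a/w - a/w0)" by (rule exp_ge_add_one_self)
  then have "exp(a/w0) * (1 + (a/w - a/w0)) \<le> exp(a/w0) * exp (a/w - a/w0)"
    by (intro mult_left_mono) auto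
  also have "\<dots> = exp (a/w)" by (simp add: exp_add[symmetric])
  finally have "w * (exp(a/w0) * (1 + (a/w - a/w0))) \<le> w * exp(a/w)"
    using assms by (intro mult_left_mono) auto
  moreover have "w * (exp(a/w0) * (1 + (a/w - a/w0))) = w0*exp(a/w0) + exp(a/w0)*(1 - a/w0)*(w-w0)"
    using assms by (simp add: field_simps)
  ultimately show ?thesis by simp
qed

lemma tmono:
  fixes a b :: real assumes "0 \<le> a" "a \<le> b"
  shows "(a-1)*exp a \<le> (b-1)*exp b"
proof (cases "a = b")
  case False
  then have "(a-1)*exp (a-1) < (b-1)*exp(b-1)" using assms by (intro xexp_strict) auto
  then have "exp 1 * ((a-1)*exp (a-1)) \<le> exp 1 * ((b-1)*exp(b-1))" by simp
  moreover have "\<And>x::real. exp 1 * ((x-1)*exp (x-1)) = (x-1)*exp x"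
    by (simp add: exp_diff)
  ultimately show ?thesis by simp
qed simp

lemma wpart:
  fixes C c N0 hk R W w d w0 :: real
  assumes c: "c>0" and N0: "N0>0" and hk: "hk>0" and C: "C\<ge>0" and R: "R>0" and W: "W>0"
    and w: "0<w" "w\<le>W"
    and d: "d = lambertW (exp (-1) * (C*hk/(c*N0) - 1)) + 1"
    and w0: "w0 = (if d > 0 then min (R*ln 2/d) W else W)"
  shows "0 < w0 \<and> w0 \<le> W \<and> (W-w)*C - c*((2 powr (R/w) - 1)*w*N0/hk)
           \<le> (W-w0)*C - c*((2 powr (R/w0)-1)*w0*N0/hk)"
proof -
  define A where "A = c*N0/hk"
  have A: "A > 0" using c N0 hk by (simp add: A_def)
  have CA: "C*hk/(c*N0) = C/A" by (simp add: A_def)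
  have CA0: "C/A \<ge> 0" using C A by simp
  have ge: "exp (-1) * (C/A - 1) \<ge> - exp (-1)"
  proof -
    have "exp (-1) * (C/A) \<ge> 0" using CA0 by (intro mult_nonneg_nonneg) auto
    then show ?thesis by (simp add: algebra_simps)
  qed
  from lambertW_prop[OF ge] d CA
  have s: "d - 1 \<ge> -1" "(d-1)*exp(d-1) = exp (-1) * (C/A - 1)" by auto
  have d0: "d \<ge> 0" using s by simp
  have key: "(d-1)*exp d = C/A - 1"
  proof -
    have "(d-1)*exp d = exp 1 * ((d-1)*exp(d-1))" by (simp add: exp_diff)
    also have "\<dots> = C/A - 1" using s(2) by (simp add: exp_minus field_simps)
    finally show ?thesis .
  qed
  have w0pos: "0 < w0" "w0 \<le> W" using w0 R W d0 by (auto simp: min_def)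
  define a where "a = R * ln 2"
  have pw: "\<And>x. 2 powr (R/x) = exp (a/x)" by (simp add: powr_def a_def)
  have T: "w*exp(a/w) \<ge> w0*exp(a/w0) + exp(a/w0)*(1 - a/w0)*(w-w0)"
    using tangent w w0pos by blast
  define D where "D = A*((a/w0 - 1)*exp(a/w0)) + A - C"
  have WD: "(w - w0)*D \<le> 0"
  proof (cases "d > 0 \<and> R*ln 2/d \<le> W")
    case True
    then have "w0 = a/d" using w0 by (simp add: a_def)
    then have "a/w0 = d" using True R by (simp add: a_def)
    then have "D = 0" unfolding D_def using key A by (simp add: field_simps)
    then show ?thesis by simp
  next
    case False
    then have ww: "w0 = W" using w0 by auto
    have "a/W \<ge> d"
    proof (cases "d > 0")
      case True
      with False have "R*ln 2/d > W" by simp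
      then have "a > W*d" using True by (simp add: a_def field_simps)
      then show ?thesis using W by (simp add: field_simps)
    next
      case False then show ?thesis using d0 R W by (simp add: a_def)
    qed
    then have "(d-1)*exp d \<le> (a/W-1)*exp (a/W)" using d0 by (intro tmono) auto
    then have "A*((d-1)*exp d) \<le> A*((a/W-1)*exp (a/W))" using A by (intro mult_left_mono) auto
    moreover have "A*((d-1)*exp d) = C - A" using key A by (simp add: field_simps)
    ultimately have "D \<ge> 0" unfolding D_def ww by simp
    then show ?thesis using w ww by (simp add: mult_nonpos_nonneg)
  qed
  have e1: "\<And>x. c*((2 powr (R/x) - 1)*x*N0/hk) = A*(x*exp(a/x)) - A*x"
    unfolding pw A_def using hk by (simp add: field_simps)
  have "(W-w)*C - c*((2 powr (R/w) - 1)*w*N0/hk) - ((W-w0)*C - c*((2 powr (R/w0)-1)*w0*N0/hk))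
      = -(w-w0)*C - A*(w*exp(a/w) - w0*exp(a/w0)) + A*(w-w0)"
    unfolding e1 by (simp add: algebra_simps)
  also have "\<dots> \<le> -(w-w0)*C - A*(exp(a/w0)*(1 - a/w0)*(w-w0)) + A*(w-w0)"
    using T A by (simp add: mult_left_mono)
  also have "\<dots> = (w-w0)*D" unfolding D_def by (simp add: algebra_simps)
  finally show ?thesis using WD w0pos by simp
qed

theorem theorem2:
  fixes N0 \<xi> Pc Pmax Rmin q lam \<mu> :: real
    and K N :: nat
    and W R h B g :: "nat \<Rightarrow> real"
    and g2 :: "nat \<Rightarrow> nat \<Rightarrow> real"
    and \<Psi> :: "nat set" and kp :: "nat \<Rightarrow> nat"
  assumes N0: "N0 > 0" and xi: "0 < \<xi>" "\<xi> \<le> 1" and Pc: "Pc > 0"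
    and Pmax: "Pmax > 0" and Rmin: "Rmin \<ge> 0"
    and W: "\<forall>k\<in>{1..K}. W k > 0" and R: "\<forall>k\<in>{1..K}. R k > 0"
    and h: "\<forall>k\<in>{1..K}. h k > 0"
    and g2: "\<forall>k\<in>{1..K}. \<forall>n\<in>{1..N}. g2 k n > 0"
    and B: "\<forall>n\<in>{1..N}. B n > 0" and g: "\<forall>n\<in>{1..N}. g n > 0"
    and Psi: "\<Psi> \<subseteq> {1..K}" and kp: "\<forall>k\<in>\<Psi>. kp k \<in> {1..N}"
    and q: "q \<ge> 0" and lam: "lam \<ge> 0" and mu: "\<mu> \<ge> 0"
    and qlam: "q + lam * \<xi> > 0"
  shows "(\<forall>n\<in>{1..N}. pn_opt N0 \<xi> q lam \<mu> (B n) (g n) \<ge> 0)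
       \<and> (\<forall>k\<in>\<Psi>. pk_opt N0 \<xi> q lam \<mu> (W k) (R k) (h k) (g2 k (kp k)) \<ge> 0
                \<and> 0 < w_opt N0 \<xi> q lam \<mu> (W k) (R k) (h k) (g2 k (kp k))
                \<and> w_opt N0 \<xi> q lam \<mu> (W k) (R k) (h k) (g2 k (kp k)) \<le> W k)
       \<and> (\<forall>p pk w.
            (\<forall>n\<in>{1..N}. p n \<ge> 0) \<longrightarrow>
            (\<forall>k\<in>\<Psi>. pk k \<ge> 0 \<and> 0 < w k \<and> w k \<le> W k) \<longrightarrow>
            lagrangian N0 \<xi> Pc Pmax Rmin N W R h g2 B g \<Psi> kp q lam \<mu> p pk w
            \<le> lagrangian N0 \<xi> Pc Pmax Rmin N W R h g2 B g \<Psi> kp q lam \<mu>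
                 (\<lambda>n. pn_opt N0 \<xi> q lam \<mu> (B n) (g n))
                 (\<lambda>k. pk_opt N0 \<xi> q lam \<mu> (W k) (R k) (h k) (g2 k (kp k)))
                 (\<lambda>k. w_opt N0 \<xi> q lam \<mu> (W k) (R k) (h k) (g2 k (kp k))))"
proof -
  define c where "c = q/\<xi> + lam"
  have c: "c > 0" using qlam xi by (simp add: c_def field_simps)
  have WL: "water_level \<xi> q lam \<mu> = (1+\<mu>)/(c*ln 2)"
    unfolding water_level_def c_def using xi by (simp add: field_simps)
  define gk where "gk k = g2 k (kp k)" for k
  define pt where "pt k = p_tilde N0 \<xi> q lam \<mu> (gk k)" for k
  define Cc where "Cc k = C_coef N0 \<xi> q lam \<mu> (gk k)" for k
  have Ccv: "Cc k = (1+\<mu>)*log 2 (1 + pt k * gk k/N0) - c*pt k" for k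
    unfolding Cc_def C_coef_def pt_def c_def Let_def by simp
  have gkpos: "gk k > 0" if "k \<in> \<Psi>" for k
    using that Psi kp g2 unfolding gk_def by blast
  have wfk: "(1+\<mu>)*log 2 (1 + u*gk k/N0) - c*u \<le> Cc k" if "k \<in> \<Psi>" "u \<ge> 0" for k u
    unfolding Ccv using wf[OF c N0 gkpos[OF that(1)] mu that(2) refl] WL
    by (simp add: pt_def p_tilde_def)
  have Cc0: "Cc k \<ge> 0" if "k \<in> \<Psi>" for k using wfk[OF that, of 0] by simp
  have ptpos: "pt k \<ge> 0" for k unfolding pt_def p_tilde_def pos_part_def by simp
  define wo where "wo k = w_opt N0 \<xi> q lam \<mu> (W k) (R k) (h k) (gk k)" for k
  have wov: "wo k = (if lambertW (exp (-1) * (Cc k * h k/(c*N0) - 1)) + 1 > 0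
                then min (R k * ln 2/(lambertW (exp (-1) * (Cc k * h k/(c*N0) - 1)) + 1)) (W k) else W k)" for k
    unfolding wo_def w_opt_def Cc_def c_def Let_def by simp
  have WP: "0 < wo k \<and> wo k \<le> W k \<and> (W k - x)*Cc k - c*((2 powr (R k/x) - 1)*x*N0/h k)
           \<le> (W k - wo k)*Cc k - c*((2 powr (R k/wo k)-1)*wo k*N0/h k)"
    if "k \<in> \<Psi>" "0 < x" "x \<le> W k" for k x
    using wpart[OF c N0 _ Cc0[OF that(1)] _ _ that(2,3) refl wov] that Psi W R h by auto
  have pko: "pk_opt N0 \<xi> q lam \<mu> (W k) (R k) (h k) (gk k) = (W k - wo k) * pt k" for k
    unfolding pk_opt_def wo_def pt_def by simp
  define F where "F n x = (1+\<mu>)*(B n * log 2 (1 + x*g n/(B n*N0))) - c*x" for n x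
  define G where "G k x y = (1+\<mu>)*bw_rate N0 (W k - y) x (gk k) - c*x
       - c*((2 powr (R k/y) - 1)*y*N0/h k)" for k x y
  have dec: "lagrangian N0 \<xi> Pc Pmax Rmin N W R h g2 B g \<Psi> kp q lam \<mu> p pk w
     = -\<mu>*Rmin - q*Pc + lam*Pmax + (\<Sum>n\<in>{1..N}. F n (p n)) + (\<Sum>k\<in>\<Psi>. G k (pk k) (w k))"
    for p pk w
  proof -
    have s1: "(\<Sum>n\<in>{1..N}. F n (p n)) = (1+\<mu>)*(\<Sum>n\<in>{1..N}. B n * log 2 (1 + p n * g n / (B n * N0)))
              - c*(\<Sum>n\<in>{1..N}. p n)"
      unfolding F_def by (simp add: sum_subtractf sum_distrib_left)
    have s2: "(\<Sum>k\<in>\<Psi>. G k (pk k) (w k)) = (1+\<mu>)*(\<Sum>k\<in>\<Psi>. bw_rate N0 (W k - w k) (pk k) (g2 k (kp k)))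
              - c*(\<Sum>k\<in>\<Psi>. pk k) - c*(\<Sum>k\<in>\<Psi>. (2 powr (R k / w k) - 1) * w k * N0 / h k)"
      unfolding G_def gk_def by (simp add: sum_subtractf sum_distrib_left)
    have s3: "(\<Sum>n\<in>{1..N}. p n / \<xi>) = (\<Sum>n\<in>{1..N}. p n) / \<xi>" by (simp add: sum_divide_distrib)
    have s4: "(\<Sum>k\<in>\<Psi>. pk k / \<xi>) = (\<Sum>k\<in>\<Psi>. pk k) / \<xi>" by (simp add: sum_divide_distrib)
    have s5: "(\<Sum>k\<in>\<Psi>. (2 powr (R k / w k) - 1) * w k * N0 / (\<xi> * h k))
          = (\<Sum>k\<in>\<Psi>. (2 powr (R k / w k) - 1) * w k * N0 / h k) / \<xi>"
      by (simp add: sum_divide_distrib mult.commute)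
    show ?thesis unfolding lagrangian_def s1 s2 s3 s4 s5 c_def using xi
      by (simp add: field_simps)
  qed
  have Fle: "F n x \<le> F n (pn_opt N0 \<xi> q lam \<mu> (B n) (g n))" if "n \<in> {1..N}" "x \<ge> 0" for n x
  proof -
    have Bn: "B n > 0" and gn: "g n > 0" using that B g by auto
    have W1: "(1+\<mu>)*log 2 (1 + (x/B n)*g n/N0) - c*(x/B n) \<le>
              (1+\<mu>)*log 2 (1 + pos_part (water_level \<xi> q lam \<mu> - N0/g n)*g n/N0)
               - c*pos_part (water_level \<xi> q lam \<mu> - N0/g n)"
      using wf[OF c N0 gn mu _ refl, of "x/B n"] WL that Bn by simp
    have "F n x = B n * ((1+\<mu>)*log 2 (1 + (x/B n)*g n/N0) - c*(x/B n))"
      unfolding F_def using Bn by (simp add: field_simps)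
    also have "\<dots> \<le> B n * ((1+\<mu>)*log 2 (1 + pos_part (water_level \<xi> q lam \<mu> - N0/g n)*g n/N0)
               - c*pos_part (water_level \<xi> q lam \<mu> - N0/g n))"
      using W1 Bn by (intro mult_left_mono) auto
    also have "\<dots> = F n (pn_opt N0 \<xi> q lam \<mu> (B n) (g n))"
      unfolding F_def pn_opt_def using Bn by (simp add: field_simps)
    finally show ?thesis .
  qed
  have Gle: "G k x y \<le> G k ((W k - wo k) * pt k) (wo k)"
    if k: "k \<in> \<Psi>" and x: "x \<ge> 0" and y: "0 < y" "y \<le> W k" for k x y
  proof -
    have st1: "(1+\<mu>)*bw_rate N0 (W k - y) x (gk k) - c*x \<le> (W k - y)*Cc k"
    proof (cases "W k - y = 0")
      case True then show ?thesis using c x by (simp add: bw_rate_def)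
    next
      case False
      then have b: "W k - y > 0" using y by simp
      have "(1+\<mu>)*bw_rate N0 (W k - y) x (gk k) - c*x
          = (W k - y)*((1+\<mu>)*log 2 (1 + (x/(W k - y))*gk k/N0) - c*(x/(W k - y)))"
        unfolding bw_rate_def using b by (simp add: field_simps)
      also have "\<dots> \<le> (W k - y)*Cc k" using wfk[OF k, of "x/(W k - y)"] b x
        by (intro mult_left_mono) auto
      finally show ?thesis .
    qed
    have st4: "G k ((W k - wo k) * pt k) (wo k) = (W k - wo k)*Cc k - c*((2 powr (R k/wo k)-1)*wo k*N0/h k)"
    proof (cases "W k - wo k = 0")
      case True then show ?thesis by (simp add: G_def bw_rate_def)
    next
      case False
      have bw: "bw_rate N0 (W k - wo k) ((W k - wo k) * pt k) (gk k) = (W k - wo k) * log 2 (1 + pt k * gk k / N0)"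
        unfolding bw_rate_def using False by simp
      show ?thesis unfolding G_def Ccv bw by (simp add: algebra_simps)
    qed
    have "G k x y \<le> (W k - y)*Cc k - c*((2 powr (R k/y) - 1)*y*N0/h k)"
      using st1 unfolding G_def by simp
    also have "\<dots> \<le> (W k - wo k)*Cc k - c*((2 powr (R k/wo k)-1)*wo k*N0/h k)"
      using WP[OF k y] by simp
    finally show ?thesis using st4 by simp
  qed
  show ?thesis
  proof (intro conjI ballI allI impI)
    fix n assume "n \<in> {1..N}"
    then have "B n > 0" using B by blast
    then show "pn_opt N0 \<xi> q lam \<mu> (B n) (g n) \<ge> 0"
      unfolding pn_opt_def pos_part_def by (intro mult_nonneg_nonneg) auto
  next
    fix k assume k: "k \<in> \<Psi>"
    show "pk_opt N0 \<xi> q lam \<mu> (W k) (R k) (h k) (g2 k (kp k)) \<ge> 0"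
      using pko[of k] WP[OF k, of "W k"] ptpos[of k] k Psi W unfolding gk_def by auto
    show "0 < w_opt N0 \<xi> q lam \<mu> (W k) (R k) (h k) (g2 k (kp k))"
      using WP[OF k, of "W k"] k Psi W unfolding wo_def gk_def by auto
    show "w_opt N0 \<xi> q lam \<mu> (W k) (R k) (h k) (g2 k (kp k)) \<le> W k"
      using WP[OF k, of "W k"] k Psi W unfolding wo_def gk_def by auto
  next
    fix p pk w :: "nat \<Rightarrow> real"
    assume hp: "\<forall>n\<in>{1..N}. p n \<ge> 0" and hk: "\<forall>k\<in>\<Psi>. pk k \<ge> 0 \<and> 0 < w k \<and> w k \<le> W k"
    have a: "(\<Sum>n\<in>{1..N}. F n (p n)) \<le> (\<Sum>n\<in>{1..N}. F n (pn_opt N0 \<xi> q lam \<mu> (B n) (g n)))"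
      using hp Fle by (intro sum_mono) auto
    have b: "(\<Sum>k\<in>\<Psi>. G k (pk k) (w k)) \<le> (\<Sum>k\<in>\<Psi>. G k ((W k - wo k) * pt k) (wo k))"
      using hk Gle by (intro sum_mono) auto
    show "lagrangian N0 \<xi> Pc Pmax Rmin N W R h g2 B g \<Psi> kp q lam \<mu> p pk w
            \<le> lagrangian N0 \<xi> Pc Pmax Rmin N W R h g2 B g \<Psi> kp q lam \<mu>
                 (\<lambda>n. pn_opt N0 \<xi> q lam \<mu> (B n) (g n))
                 (\<lambda>k. pk_opt N0 \<xi> q lam \<mu> (W k) (R k) (h k) (g2 k (kp k)))
                 (\<lambda>k. w_opt N0 \<xi> q lam \<mu> (W k) (R k) (h k) (g2 k (kp k)))"
      unfolding dec using a b pko unfolding wo_def gk_def by simp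
  qed
qed

end
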